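(* Let $n\ge 4$. For every cycle $C$ of length 8 in $Q_n$ there is an automorphism of $Q_n$ mapping $C$ onto exactly one of the following seven cycles, which are pairwise non-isomorphic (no automorphism of $Q_n$ maps one onto another): $C_8^1=(0,1,3,2,6,7,5,4)$, $C_8^2=(0,1,3,2,6,14,12,8)$, $C_8^3=(0,1,3,2,6,14,12,4)$, $C_8^4=(0,1,3,2,6,4,12,8)$, $C_8^5=(0,1,3,7,15,14,12,8)$, $C_8^6=(0,1,3,7,15,14,12,4)$, $C_8^7=(0,1,3,7,6,14,10,8)$. Moreover, the number of edges of $Q_n$ joining the parity-0 vertices of the cycle to vertices outside the cycle is $4n-12$ for $C_8^1$, $4n-9$ for $C_8^2$, $4n-10$ for $C_8^3$ and for $C_8^4$, and $4n-8$ for each of $C_8^5$, $C_8^6$, $C_8^7$.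
   Context: $Q_n$ is the $n$-dimensional hypercube whose vertices are the binary strings of length $n$, identified with the integers $0,\dots,2^n-1$ via binary expansion; two vertices are adjacent iff their labels differ in exactly one bit. The parity of a vertex is the number of ones in its label modulo 2. Cycles are written as sequences of vertices. The automorphisms of $Q_n$ are the maps $x\mapsto g_\pi(x\oplus v)$, where $\oplus$ is bitwise XOR with a fixed vertex $v$ and $g_\pi$ permutes the coordinate positions by a permutation $\pi$ of $\{0,\dots,n-1\}$. *)

theory Defs
  imports Main
begin

text \<open>Vertices of Q_n are the naturals 0..2^n-1; bit i of a label is coordinate i.\<close>

definition qvert :: "nat \<Rightarrow> nat set" where
  "qvert n = {..<2^n}"

definition qadj :: "nat \<Rightarrow> nat \<Rightarrow> nat \<Rightarrow> bool" where
  "qadj n x y \<longleftrightarrow> x \<in> qvert n \<and> y \<in> qvert n \<and>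
     card {i. i < n \<and> bit x i \<noteq> bit y i} = 1"

definition qparity :: "nat \<Rightarrow> nat \<Rightarrow> nat" where
  "qparity n x = card {i. i < n \<and> bit x i} mod 2"

definition qcycle :: "nat \<Rightarrow> nat list \<Rightarrow> bool" where
  "qcycle n C \<longleftrightarrow> length C \<ge> 3 \<and> distinct C \<and> set C \<subseteq> qvert n \<and>
     (\<forall>i < length C. qadj n (C ! i) (C ! ((i + 1) mod length C)))"

definition cycle_edges :: "nat list \<Rightarrow> nat set set" where
  "cycle_edges C = {{C ! i, C ! ((i + 1) mod length C)} | i. i < length C}"

definition perm_bits :: "nat \<Rightarrow> (nat \<Rightarrow> nat) \<Rightarrow> nat \<Rightarrow> nat" where
  "perm_bits n \<pi> y = (\<Sum>i<n. if bit y i then 2 ^ (\<pi> i) else 0)"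

definition qaut :: "nat \<Rightarrow> (nat \<Rightarrow> nat) \<Rightarrow> bool" where
  "qaut n f \<longleftrightarrow> (\<exists>\<pi> v. bij_betw \<pi> {..<n} {..<n} \<and> v \<in> qvert n \<and>
     (\<forall>x \<in> qvert n. f x = perm_bits n \<pi> (xor x v)))"

definition maps_cycle_onto :: "nat \<Rightarrow> nat list \<Rightarrow> nat list \<Rightarrow> bool" where
  "maps_cycle_onto n C D \<longleftrightarrow> (\<exists>f. qaut n f \<and> cycle_edges (map f C) = cycle_edges D)"

definition even_out_edges :: "nat \<Rightarrow> nat list \<Rightarrow> nat" where
  "even_out_edges n C = card {(u, w). u \<in> set C \<and> qparity n u = 0 \<and>
     w \<in> qvert n \<and> w \<notin> set C \<and> qadj n u w}"

definition C8 :: "nat \<Rightarrow> nat list" where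
  "C8 k = (if k = 1 then [0,1,3,2,6,7,5,4]
      else if k = 2 then [0,1,3,2,6,14,12,8]
      else if k = 3 then [0,1,3,2,6,14,12,4]
      else if k = 4 then [0,1,3,2,6,4,12,8]
      else if k = 5 then [0,1,3,7,15,14,12,8]
      else if k = 6 then [0,1,3,7,15,14,12,4]
      else [0,1,3,7,6,14,10,8])"

end

theory Submission
  imports Defs
begin


lemma hi_bit: "(x::nat) < 2^n \<Longrightarrow> n \<le> i \<Longrightarrow> \<not> bit x i"
proof -
  assume a: "x < 2^n" "n \<le> i"
  have "take_bit n x = x" using a by (simp add: take_bit_nat_eq_self)
  then have "bit x i = bit (take_bit n x) i" by simp
  then show ?thesis using a by (simp add: bit_take_bit_iff)
qed

lemma lt_of_bits: "(\<And>i. n \<le> i \<Longrightarrow> \<not> bit (x::nat) i) \<Longrightarrow> x < 2^n"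
proof -
  assume a: "\<And>i. n \<le> i \<Longrightarrow> \<not> bit (x::nat) i"
  have "take_bit n x = x"
    by (rule bit_eqI) (use a not_le in \<open>auto simp: bit_take_bit_iff\<close>)
  then show ?thesis by (metis take_bit_nat_eq_self_iff)
qed

lemma eq_of_bits: "(x::nat) < 2^n \<Longrightarrow> y < 2^n \<Longrightarrow> (\<And>i. i < n \<Longrightarrow> bit x i = bit y i) \<Longrightarrow> x = y"
  by (rule bit_eqI) (metis hi_bit not_le)

lemma xor_lt: "(x::nat) < 2^n \<Longrightarrow> i < n \<Longrightarrow> xor x (2^i) < 2^n"
  by (rule lt_of_bits) (auto simp: bit_xor_iff bit_exp_iff hi_bit)

definition ham :: "nat \<Rightarrow> nat \<Rightarrow> nat \<Rightarrow> nat" where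
  "ham n x y = card {i. i < n \<and> bit x i \<noteq> bit y i}"

lemma qadj_ham: "qadj n x y \<longleftrightarrow> x \<in> qvert n \<and> y \<in> qvert n \<and> ham n x y = 1"
  by (simp add: qadj_def ham_def)

lemma ham_xor: "i < n \<Longrightarrow> ham n x (xor x (2^i)) = 1"
proof -
  assume "i < n"
  then have "{j. j < n \<and> bit x j \<noteq> bit (xor x (2^i)) j} = {i}"
    by (auto simp: bit_xor_iff bit_exp_iff)
  then show ?thesis by (simp add: ham_def)
qed

lemma ham1_xor:
  assumes "(x::nat) < 2^n" "y < 2^n" "ham n x y = 1"
  shows "\<exists>i<n. y = xor x (2^i)"
proof -
  obtain i where i: "{j. j < n \<and> bit x j \<noteq> bit y j} = {i}"
    using assms(3) unfolding ham_def by (meson card_1_singletonE)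
  then have "i < n" by blast
  moreover have "y = xor x (2^i)"
  proof (rule eq_of_bits[OF assms(2) xor_lt[OF assms(1) \<open>i < n\<close>]])
    fix j assume "j < n"
    then show "bit y j = bit (xor x (2 ^ i)) j"
      using i by (auto simp: bit_xor_iff bit_exp_iff)
  qed
  ultimately show ?thesis by blast
qed

lemma qadj_iff: "qadj n x y \<longleftrightarrow> x \<in> qvert n \<and> (\<exists>i<n. y = xor x (2^i))"
  unfolding qadj_ham
  by (auto simp: qvert_def ham_xor xor_lt dest: ham1_xor)

lemma ham0: "(x::nat) < 2^n \<Longrightarrow> y < 2^n \<Longrightarrow> ham n x y = 0 \<Longrightarrow> x = y"
  unfolding ham_def by (rule eq_of_bits) auto

lemma bit_sum_pow:
  assumes "finite S" "inj_on g S"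
  shows "bit (\<Sum>i\<in>S. 2 ^ g i :: nat) j \<longleftrightarrow> j \<in> g ` S"
  using assms
proof (induction S arbitrary: j rule: finite_induct)
  case empty then show ?case by simp
next
  case (insert a S)
  have ga: "g a \<notin> g ` S" using insert by auto
  have ih: "\<And>j. bit (\<Sum>i\<in>S. 2 ^ g i :: nat) j \<longleftrightarrow> j \<in> g ` S"
    using insert.IH insert.prems by simp
  have "(\<Sum>i\<in>insert a S. 2 ^ g i :: nat) = 2 ^ g a + (\<Sum>i\<in>S. 2 ^ g i)"
    using insert by simp
  also have "bit \<dots> j \<longleftrightarrow> bit (2 ^ g a :: nat) j \<or> bit (\<Sum>i\<in>S. 2 ^ g i :: nat) j"
    apply (rule bit_disjunctive_add_iff)
    using ih ga by (auto simp: bit_exp_iff)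
  finally show ?case using ih by (auto simp: bit_exp_iff)
qed

lemma bit_perm_bits:
  assumes "inj_on \<pi> {..<n}"
  shows "bit (perm_bits n \<pi> y) j \<longleftrightarrow> (\<exists>i<n. \<pi> i = j \<and> bit y i)"
proof -
  have "perm_bits n \<pi> y = (\<Sum>i\<in>{i. i<n \<and> bit y i}. 2 ^ \<pi> i)"
    unfolding perm_bits_def
    by (rule sum.mono_neutral_cong_right) auto
  moreover have "inj_on \<pi> {i. i<n \<and> bit y i}" using assms by (rule inj_on_subset) auto
  ultimately show ?thesis by (auto simp: bit_sum_pow)
qed

lemma aut_bit:
  assumes "bij_betw \<pi> {..<n} {..<n}" "i < n"
  shows "bit (perm_bits n \<pi> (xor x v)) (\<pi> i) \<longleftrightarrow> bit x i \<noteq> bit v i"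
proof -
  have inj: "inj_on \<pi> {..<n}" using assms(1) bij_betw_def by blast
  show ?thesis
    unfolding bit_perm_bits[OF inj] using assms(2) inj
    by (auto simp: bit_xor_iff inj_on_def)
qed

lemma aut_ham_aux:
  assumes "bij_betw \<pi> {..<n} {..<n}"
  shows "ham n (perm_bits n \<pi> (xor x v)) (perm_bits n \<pi> (xor y v)) = ham n x y"
proof -
  have inj: "inj_on \<pi> {..<n}" using assms(1) bij_betw_def by blast
  have "{j. j < n \<and> bit (perm_bits n \<pi> (xor x v)) j \<noteq> bit (perm_bits n \<pi> (xor y v)) j}
      = \<pi> ` {i. i < n \<and> bit x i \<noteq> bit y i}"
  proof (intro set_eqI iffI)
    fix j assume j: "j \<in> {j. j < n \<and> bit (perm_bits n \<pi> (xor x v)) j \<noteq> bit (perm_bits n \<pi> (xor y v)) j}"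
    then obtain i where i: "i < n" "j = \<pi> i" using assms unfolding bij_betw_def
      by (metis (no_types, lifting) imageE lessThan_iff mem_Collect_eq)
    then show "j \<in> \<pi> ` {i. i < n \<and> bit x i \<noteq> bit y i}"
      using j aut_bit[OF assms i(1)] by auto
  next
    fix j assume "j \<in> \<pi> ` {i. i < n \<and> bit x i \<noteq> bit y i}"
    then obtain i where i: "i < n" "j = \<pi> i" "bit x i \<noteq> bit y i" by auto
    have "j < n" using assms i unfolding bij_betw_def by auto
    then show "j \<in> {j. j < n \<and> bit (perm_bits n \<pi> (xor x v)) j \<noteq> bit (perm_bits n \<pi> (xor y v)) j}"
      using aut_bit[OF assms i(1)] i by auto
  qed
  moreover have "inj_on \<pi> {i. i < n \<and> bit x i \<noteq> bit y i}" using inj by (rule inj_on_subset) auto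
  ultimately show ?thesis unfolding ham_def by (simp add: card_image)
qed

lemma aut_ham: "qaut n f \<Longrightarrow> x \<in> qvert n \<Longrightarrow> y \<in> qvert n \<Longrightarrow> ham n (f x) (f y) = ham n x y"
  unfolding qaut_def using aut_ham_aux by metis

lemma ham_self: "ham n x x = 0" by (simp add: ham_def)

lemma aut_inj: "qaut n f \<Longrightarrow> inj_on f (qvert n)"
proof (rule inj_onI)
  fix x y assume a: "qaut n f" "x \<in> qvert n" "y \<in> qvert n" "f x = f y"
  have "ham n x y = 0" using aut_ham[OF a(1-3)] a(4) ham_self by metis
  then show "x = y" using ham0 a(2,3) by (simp add: qvert_def)
qed

lemma Union_edges: "L \<noteq> [] \<Longrightarrow> \<Union> (cycle_edges L) = set L"
proof (intro set_eqI iffI)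
  fix x assume "L \<noteq> []" "x \<in> \<Union> (cycle_edges L)"
  then show "x \<in> set L" by (auto simp: cycle_edges_def)
next
  fix x assume a: "L \<noteq> []" "x \<in> set L"
  then obtain i where "i < length L" "x = L ! i" by (metis in_set_conv_nth)
  then show "x \<in> \<Union> (cycle_edges L)" unfolding cycle_edges_def by blast
qed

definition hsum :: "nat \<Rightarrow> nat set \<Rightarrow> nat" where
  "hsum n V = (\<Sum>x\<in>V. \<Sum>y\<in>V. ham n x y)"

lemma maps_hsum:
  assumes "maps_cycle_onto n C D" "C \<noteq> []" "set C \<subseteq> qvert n"
  shows "hsum n (set C) = hsum n (set D)"
proof -
  obtain f where f: "qaut n f" "cycle_edges (map f C) = cycle_edges D"
    using assms(1) maps_cycle_onto_def by blast
  have "D \<noteq> []"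
  proof
    assume "D = []"
    then have "cycle_edges D = {}" by (simp add: cycle_edges_def)
    moreover have "cycle_edges (map f C) \<noteq> {}" using assms(2) by (auto simp: cycle_edges_def)
    ultimately show False using f(2) by simp
  qed
  then have img: "f ` set C = set D"
    using Union_edges[of D] Union_edges[of "map f C"] assms(2) f(2) by simp
  have inj: "inj_on f (set C)" using aut_inj[OF f(1)] assms(3) inj_on_subset by blast
  have "hsum n (set D) = (\<Sum>x\<in>set C. \<Sum>y\<in>set C. ham n (f x) (f y))"
    unfolding hsum_def img[symmetric] using inj by (simp add: sum.reindex)
  also have "\<dots> = hsum n (set C)" unfolding hsum_def
    using aut_ham[OF f(1)] assms(3) by (intro sum.cong) auto
  finally show ?thesis by simp
qed

lemma ham_small: "(x::nat) < 16 \<Longrightarrow> y < 16 \<Longrightarrow> 4 \<le> n \<Longrightarrow>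
   ham n x y = length (filter (\<lambda>i. bit x i \<noteq> bit y i) [0..<4])"
proof -
  assume a: "x < 16" "y < 16" "4 \<le> n"
  have "{i. i < n \<and> bit x i \<noteq> bit y i} = set (filter (\<lambda>i. bit x i \<noteq> bit y i) [0..<4])"
    using a hi_bit[of x 4] hi_bit[of y 4] by (auto simp: not_less) (meson not_less)+
  then show ?thesis unfolding ham_def by (metis distinct_card distinct_filter distinct_upt)
qed

definition h4 :: "nat \<Rightarrow> nat \<Rightarrow> nat" where
  "h4 x y = length (filter (\<lambda>i. bit x i \<noteq> bit y i) [0..<4])"

definition hv :: "nat \<Rightarrow> nat" where
  "hv k = (\<Sum>x\<in>set (C8 k). \<Sum>y\<in>set (C8 k). h4 x y)"

lemma hv_vals: "map hv [1..<8] = [96,116,112,108,128,124,120]"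
  by code_simp

lemma C8_small: "x \<in> set (C8 k) \<Longrightarrow> x < 16"
  unfolding C8_def by (auto split: if_splits)

lemma hsum_C8: "4 \<le> n \<Longrightarrow> hsum n (set (C8 k)) = hv k"
  unfolding hsum_def hv_def h4_def
  by (intro sum.cong refl) (simp add: ham_small C8_small)

lemma xor_cancel: "xor (u::nat) a = xor u b \<Longrightarrow> a = b"
  by (rule bit_eqI) (metis bit_xor_iff)

lemma bit_small: "(x::nat) < 16 \<Longrightarrow> 4 \<le> n \<Longrightarrow> {i. i < n \<and> bit x i} = set (filter (bit x) [0..<4])"
  using hi_bit[of x 4] by (auto simp: not_less) (meson not_less)

lemma qparity_small: "(x::nat) < 16 \<Longrightarrow> 4 \<le> n \<Longrightarrow> qparity n x = length (filter (bit x) [0..<4]) mod 2"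
  unfolding qparity_def by (simp only: bit_small) (metis distinct_card distinct_filter distinct_upt)

definition Ev4 :: "nat list \<Rightarrow> nat set" where
  "Ev4 C = {u \<in> set C. length (filter (bit u) [0..<4]) mod 2 = 0}"

definition cc :: "nat list \<Rightarrow> nat \<Rightarrow> nat" where
  "cc C u = length (filter (\<lambda>i. xor u (2^i) \<notin> set C) [0..<4])"

lemma xor_big: "(u::nat) < 16 \<Longrightarrow> 4 \<le> i \<Longrightarrow> \<not> xor u (2^i) < 16"
proof
  assume a: "u < 16" "4 \<le> i" "xor u (2^i) < 16"
  have "bit (xor u (2^i)) i" using hi_bit[of u 4 i] a by (simp add: bit_xor_iff bit_exp_iff)
  then show False using hi_bit[of "xor u (2^i)" 4 i] a by simp
qed

lemma count_small:
  assumes "set C \<subseteq> {..<16}" "4 \<le> n" "u \<in> set C"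
  shows "card {i. i < n \<and> xor u (2^i) \<notin> set C} = cc C u + (n - 4)"
proof -
  have u: "u < 16" using assms by auto
  have "{i. i < n \<and> xor u (2^i) \<notin> set C} = set (filter (\<lambda>i. xor u (2^i) \<notin> set C) [0..<4]) \<union> {4..<n}"
    using assms xor_big[OF u] by (auto simp: not_less) (meson lessThan_iff not_less subsetD)
  moreover have "card (set (filter (\<lambda>i. xor u (2^i) \<notin> set C) [0..<4]) \<union> {4..<n}) =
     card (set (filter (\<lambda>i. xor u (2^i) \<notin> set C) [0..<4])) + card {4..<n}"
    by (rule card_Un_disjoint) auto
  moreover have "card (set (filter (\<lambda>i. xor u (2^i) \<notin> set C) [0..<4])) = cc C u"
    unfolding cc_def by (metis distinct_card distinct_filter distinct_upt)
  ultimately show ?thesis by simp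
qed

lemma eoe_formula:
  assumes "set C \<subseteq> {..<16}" "4 \<le> n"
  shows "even_out_edges n C = (\<Sum>u\<in>Ev4 C. cc C u) + card (Ev4 C) * (n - 4)"
proof -
  have vert: "\<And>u. u \<in> set C \<Longrightarrow> u \<in> qvert n"
  proof -
    fix u assume "u \<in> set C"
    then have "u < 16" using assms by auto
    moreover have "(2::nat)^4 \<le> 2^n" by (rule power_increasing) (simp_all add: assms)
    ultimately show "u \<in> qvert n" by (simp add: qvert_def)
  qed
  let ?S = "{(u, i). u \<in> Ev4 C \<and> i < n \<and> xor u (2^i) \<notin> set C}"
  let ?g = "\<lambda>(u, i). (u, xor u (2^i))"
  have par: "\<And>u. u \<in> set C \<Longrightarrow> qparity n u = 0 \<longleftrightarrow> u \<in> Ev4 C"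
    using assms by (auto simp: Ev4_def qparity_small)
  have "{(u, w). u \<in> set C \<and> qparity n u = 0 \<and> w \<in> qvert n \<and> w \<notin> set C \<and> qadj n u w} = ?g ` ?S"
  proof (intro set_eqI iffI)
    fix p assume "p \<in> {(u, w). u \<in> set C \<and> qparity n u = 0 \<and> w \<in> qvert n \<and> w \<notin> set C \<and> qadj n u w}"
    then obtain u w where p: "p = (u, w)" "u \<in> set C" "qparity n u = 0" "w \<notin> set C" "qadj n u w" by blast
    then obtain i where "i < n" "w = xor u (2^i)" by (auto simp: qadj_iff)
    then show "p \<in> ?g ` ?S" using p par by (auto intro!: image_eqI[where x="(u,i)"])
  next
    fix p assume "p \<in> ?g ` ?S"
    then obtain u i where p: "p = (u, xor u (2^i))" "u \<in> Ev4 C" "i < n" "xor u (2^i) \<notin> set C" by auto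
    have uC: "u \<in> set C" using p by (simp add: Ev4_def)
    then have "u < 2^n" using vert by (simp add: qvert_def)
    then show "p \<in> {(u, w). u \<in> set C \<and> qparity n u = 0 \<and> w \<in> qvert n \<and> w \<notin> set C \<and> qadj n u w}"
      using p uC par vert[OF uC] xor_lt by (auto simp: qadj_iff qvert_def)
  qed
  moreover have "inj_on ?g ?S"
    by (rule inj_onI) (auto dest!: xor_cancel)
  moreover have "?S = Sigma (Ev4 C) (\<lambda>u. {i. i < n \<and> xor u (2^i) \<notin> set C})" by auto
  moreover have "card (Sigma (Ev4 C) (\<lambda>u. {i. i < n \<and> xor u (2^i) \<notin> set C}))
      = (\<Sum>u\<in>Ev4 C. card {i. i < n \<and> xor u (2^i) \<notin> set C})"
    by (rule card_SigmaI) (auto simp: Ev4_def)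
  moreover have "\<dots> = (\<Sum>u\<in>Ev4 C. cc C u + (n - 4))"
    using count_small[OF assms] by (intro sum.cong) (auto simp: Ev4_def)
  ultimately show ?thesis unfolding even_out_edges_def
    by (simp add: card_image sum.distrib)
qed




fun xsum :: "nat list \<Rightarrow> nat" where
  "xsum [] = 0" | "xsum (c#cs) = xor (2^c) (xsum cs)"
fun walkf :: "nat \<Rightarrow> nat list \<Rightarrow> nat list" where
  "walkf x [] = []" | "walkf x (c#r) = x # walkf (xor x (2^c)) r"
fun endp :: "nat \<Rightarrow> nat list \<Rightarrow> nat" where
  "endp x [] = x" | "endp x (c#r) = endp (xor x (2^c)) r"
fun idx :: "nat list \<Rightarrow> nat \<Rightarrow> nat" where
  "idx [] x = 0" | "idx (y#ys) x = (if x = y then 0 else Suc (idx ys x))"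
fun nrm :: "nat list \<Rightarrow> nat list \<Rightarrow> nat list" where
  "nrm L [] = []"
| "nrm L (x#xs) = (if x \<in> set L then idx L x # nrm L xs else length L # nrm (L@[x]) xs)"
fun rgm :: "nat \<Rightarrow> nat list \<Rightarrow> bool" where
  "rgm m [] = True" | "rgm m (c#r) = (c \<le> m \<and> rgm (if c = m then Suc m else m) r)"
definition cseqs :: "nat list list" where
  "cseqs = [[0, 1, 0, 2, 0, 1, 0, 2],[0, 1, 0, 2, 3, 1, 2, 3],[0, 1, 0, 2, 3, 1, 3, 2],
  [0, 1, 0, 2, 1, 3, 2, 3],[0, 1, 2, 3, 0, 1, 2, 3],[0, 1, 2, 3, 0, 1, 3, 2],[0, 1, 2, 0, 3, 2, 1, 3]]"
definition okf :: "nat list \<Rightarrow> bool" where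
  "okf e = (\<exists>s\<in>set [0..<8]. nrm [] (rotate s e) \<in> set cseqs)"
fun chk :: "nat \<Rightarrow> nat \<Rightarrow> nat list \<Rightarrow> nat \<Rightarrow> nat list \<Rightarrow> bool" where
  "chk 0 m vs x pre = (x \<noteq> 0 \<or> okf (rev pre))"
| "chk (Suc k) m vs x pre = (\<forall>c\<in>set [0..<Suc m]. (xor x (2^c) \<in> set vs \<and> k \<noteq> 0) \<or>
      chk k (if c = m then Suc m else m) (xor x (2^c) # vs) (xor x (2^c)) (c#pre))"

lemma chk8: "chk 8 0 [0] 0 []" by code_simp

lemma cseqs_walk: "map (walkf 0) cseqs = map C8 [1..<8]" by code_simp

lemma chk_sound:
  "chk k m vs x pre \<Longrightarrow> length r = k \<Longrightarrow> rgm m r \<Longrightarrow> distinct (walkf x r) \<Longrightarrow>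
   (\<forall>y\<in>set (walkf x r). y \<in> set vs \<longrightarrow> y = x) \<Longrightarrow> endp x r = 0 \<Longrightarrow> okf (rev pre @ r)"
proof (induction r arbitrary: k m vs x pre)
  case Nil
  then show ?case by simp
next
  case (Cons c r)
  then obtain k' where k: "k = Suc k'" "length r = k'" by auto
  let ?y = "xor x (2^c)"
  have cm: "c \<le> m" using Cons.prems by simp
  have ch: "(?y \<in> set vs \<and> k' \<noteq> 0) \<or> chk k' (if c = m then Suc m else m) (?y # vs) ?y (c#pre)"
    using Cons.prems(1) k cm by auto
  show ?case
  proof (cases "?y \<in> set vs \<and> k' \<noteq> 0")
    case True
    then obtain d r' where "r = d # r'" using k by (cases r) auto
    then show ?thesis using True Cons.prems by auto
  next
    case False
    then have c2: "chk k' (if c = m then Suc m else m) (?y # vs) ?y (c#pre)" using ch by blast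
    have "okf (rev (c#pre) @ r)"
    proof (rule Cons.IH[OF c2 k(2)])
      show "rgm (if c = m then Suc m else m) r" using Cons.prems by simp
      show "distinct (walkf ?y r)" using Cons.prems by simp
      show "endp ?y r = 0" using Cons.prems by simp
      show "\<forall>z\<in>set (walkf ?y r). z \<in> set (?y # vs) \<longrightarrow> z = ?y"
        using Cons.prems(4,5) by auto
    qed
    then show ?thesis by simp
  qed
qed

lemma idx_less: "x \<in> set L \<Longrightarrow> idx L x < length L"
  by (induction L) auto

lemma idx_nth: "distinct L \<Longrightarrow> i < length L \<Longrightarrow> idx L (L ! i) = i"
proof (induction L arbitrary: i)
  case Nil then show ?case by simp
next
  case (Cons a L) then show ?case
    by (cases i) (auto simp: nth_mem)
qed

lemma idx_map: "inj_on \<tau> (insert x (set L)) \<Longrightarrow> idx (map \<tau> L) (\<tau> x) = idx L x"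
proof (induction L)
  case Nil then show ?case by simp
next
  case (Cons a L)
  then have "\<tau> x = \<tau> a \<longleftrightarrow> x = a" by (auto simp: inj_on_def)
  moreover have "inj_on \<tau> (insert x (set L))" using Cons.prems by (rule inj_on_subset) auto
  ultimately show ?case using Cons.IH by simp
qed

lemma nrm_len: "length (nrm L xs) = length xs"
  by (induction L xs rule: nrm.induct) auto

lemma nrm_rgm: "distinct L \<Longrightarrow> rgm (length L) (nrm L xs)"
proof (induction xs arbitrary: L)
  case Nil then show ?case by simp
next
  case (Cons x xs)
  show ?case
  proof (cases "x \<in> set L")
    case True
    then show ?thesis using Cons idx_less[OF True] by simp
  next
    case False
    then have "distinct (L @ [x])" using Cons.prems by simp
    then show ?thesis using Cons.IH False by fastforce
  qed
qed

lemma nrm_map: "inj_on \<tau> (set L \<union> set xs) \<Longrightarrow> nrm (map \<tau> L) (map \<tau> xs) = nrm L xs"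
proof (induction xs arbitrary: L)
  case Nil then show ?case by simp
next
  case (Cons x xs)
  have inj: "inj_on \<tau> (set L \<union> set xs)" using Cons.prems by (rule inj_on_subset) auto
  have mem: "\<tau> x \<in> set (map \<tau> L) \<longleftrightarrow> x \<in> set L"
    using Cons.prems by (auto simp: inj_on_def)
  show ?case
  proof (cases "x \<in> set L")
    case True
    have "idx (map \<tau> L) (\<tau> x) = idx L x"
      by (rule idx_map) (use Cons.prems True in \<open>auto intro: inj_on_subset\<close>)
    then show ?thesis using True mem Cons.IH[OF inj] by simp
  next
    case False
    have "inj_on \<tau> (set (L @ [x]) \<union> set xs)" using Cons.prems by (rule inj_on_subset) auto
    then have "nrm (map \<tau> (L @ [x])) (map \<tau> xs) = nrm (L @ [x]) xs" by (rule Cons.IH)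
    then show ?thesis using False mem by simp
  qed
qed

lemma nrm_tau:
  "distinct L \<Longrightarrow> \<exists>\<tau>. inj_on \<tau> (set L \<union> set xs) \<and> \<tau> ` (set L \<union> set xs) = {..<card (set L \<union> set xs)}
     \<and> (\<forall>i<length L. \<tau> (L ! i) = i) \<and> map \<tau> xs = nrm L xs"
proof (induction xs arbitrary: L)
  case Nil
  have inj: "inj_on (idx L) (set L)"
    by (rule inj_onI) (metis Nil.prems idx_nth in_set_conv_nth)
  have "idx L ` set L = {..<length L}"
  proof (intro set_eqI iffI)
    fix j assume "j \<in> idx L ` set L" then show "j \<in> {..<length L}" using idx_less by auto
  next
    fix j assume "j \<in> {..<length L}"
    then show "j \<in> idx L ` set L" using idx_nth[OF Nil.prems] by (metis imageI lessThan_iff nth_mem)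
  qed
  then show ?case using inj idx_nth[OF Nil.prems] distinct_card[OF Nil.prems]
    by (intro exI[of _ "idx L"]) auto
next
  case (Cons x xs)
  show ?case
  proof (cases "x \<in> set L")
    case True
    obtain \<tau> where t: "inj_on \<tau> (set L \<union> set xs)" "\<tau> ` (set L \<union> set xs) = {..<card (set L \<union> set xs)}"
      "\<forall>i<length L. \<tau> (L ! i) = i" "map \<tau> xs = nrm L xs" using Cons.IH[OF Cons.prems] by blast
    have eq: "set L \<union> set (x#xs) = set L \<union> set xs" using True by auto
    obtain j where j: "j < length L" "x = L ! j" using True by (metis in_set_conv_nth)
    have "\<tau> x = idx L x" using t(3) j idx_nth[OF Cons.prems] by simp
    then show ?thesis using t True unfolding eq by (intro exI[of _ \<tau>]) simp
  next
    case False
    have d: "distinct (L @ [x])" using Cons.prems False by simp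
    obtain \<tau> where t: "inj_on \<tau> (set (L@[x]) \<union> set xs)" "\<tau> ` (set (L@[x]) \<union> set xs) = {..<card (set (L@[x]) \<union> set xs)}"
      "\<forall>i<length (L@[x]). \<tau> ((L@[x]) ! i) = i" "map \<tau> xs = nrm (L@[x]) xs" using Cons.IH[OF d] by blast
    have eq: "set (L@[x]) \<union> set xs = set L \<union> set (x#xs)" by auto
    have t3: "\<forall>i<length L. \<tau> (L ! i) = i"
    proof (intro allI impI)
      fix i assume "i < length L"
      then show "\<tau> (L ! i) = i" using t(3)[rule_format, of i] by (simp add: nth_append)
    qed
    have tx: "\<tau> x = length L" using t(3)[rule_format, of "length L"] by simp
    show ?thesis using t t3 tx False unfolding eq by (intro exI[of _ \<tau>]) simp
  qed
qed

lemma extend_bij: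
  fixes n :: nat and \<tau> :: "nat \<Rightarrow> nat" and A :: "nat set"
  assumes "A \<subseteq> {..<n}" "inj_on \<tau> A" "\<tau> ` A \<subseteq> {..<n}"
  shows "\<exists>\<pi>. bij_betw \<pi> {..<n} {..<n} \<and> (\<forall>x\<in>A. \<pi> x = \<tau> x)"
proof -
  have fA: "finite A" by (rule finite_subset[OF assms(1)]) simp
  have c1: "card ({..<n} - A) = n - card A" using assms(1) fA by (simp add: card_Diff_subset)
  have c2: "card ({..<n} - \<tau> ` A) = n - card (\<tau> ` A)" using assms(3) fA by (simp add: card_Diff_subset)
  have c3: "card (\<tau> ` A) = card A" by (rule card_image[OF assms(2)])
  have "card ({..<n} - A) = card ({..<n} - \<tau> ` A)" using c1 c2 c3 by simp
  then obtain g where g: "bij_betw g ({..<n} - A) ({..<n} - \<tau> ` A)"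
    using finite_same_card_bij[of "{..<n} - A" "{..<n} - \<tau> ` A"] by blast
  define \<pi> where "\<pi> x = (if x \<in> A then \<tau> x else g x)" for x
  have t: "bij_betw \<tau> A (\<tau> ` A)" by (rule bij_betw_imageI[OF assms(2) refl])
  have b1: "bij_betw \<pi> A (\<tau> ` A)"
    using bij_betw_cong[of A \<pi> \<tau> "\<tau> ` A"] t by (simp add: \<pi>_def)
  have b2: "bij_betw \<pi> ({..<n} - A) ({..<n} - \<tau> ` A)"
    using bij_betw_cong[of "{..<n} - A" \<pi> g "{..<n} - \<tau> ` A"] g by (simp add: \<pi>_def)
  have "bij_betw \<pi> (A \<union> ({..<n} - A)) (\<tau> ` A \<union> ({..<n} - \<tau> ` A))"
    by (rule bij_betw_combine[OF b1 b2]) auto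
  moreover have "A \<union> ({..<n} - A) = {..<n}" "\<tau> ` A \<union> ({..<n} - \<tau> ` A) = {..<n}" using assms by auto
  ultimately show ?thesis by (intro exI[of _ \<pi>]) (simp add: \<pi>_def)
qed




lemma xor_self_cancel: "xor (xor a b) a = (b::nat)"
  by (rule bit_eqI) (auto simp: bit_xor_iff)

lemma xor_eq_self:
  assumes "xor a b = (a::nat)" shows "b = 0"
proof (rule bit_eqI)
  fix j
  have "bit (xor a b) j = bit a j" using assms by simp
  then show "bit b j = bit 0 j" by (auto simp: bit_xor_iff)
qed

lemma xsum_snoc: "xsum (xs @ [c]) = xor (xsum xs) (2^c)"
  by (induction xs) (simp_all add: xor.assoc xor.commute xor.left_commute)

lemma walkf_len: "length (walkf x r) = length r"
  by (induction r arbitrary: x) auto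

lemma walkf_nth: "i < length r \<Longrightarrow> walkf x r ! i = xor x (xsum (take i r))"
proof (induction r arbitrary: x i)
  case Nil then show ?case by simp
next
  case (Cons c r) then show ?case
    by (cases i) (auto simp: xor.assoc)
qed

lemma endp_xsum: "endp x r = xor x (xsum r)"
  by (induction r arbitrary: x) (auto simp: xor.assoc)

lemma perm_xor:
  assumes inj: "inj_on \<pi> {..<n}"
  shows "perm_bits n \<pi> (xor a b) = xor (perm_bits n \<pi> a) (perm_bits n \<pi> b)"
proof (rule bit_eqI)
  fix j
  show "bit (perm_bits n \<pi> (xor a b)) j = bit (xor (perm_bits n \<pi> a) (perm_bits n \<pi> b)) j"
  proof (cases "\<exists>i<n. \<pi> i = j")
    case True
    then obtain i where i: "i < n" "\<pi> i = j" by blast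
    have u: "\<And>i'. i' < n \<Longrightarrow> \<pi> i' = j \<Longrightarrow> i' = i" using inj i unfolding inj_on_def by auto
    show ?thesis unfolding bit_xor_iff bit_perm_bits[OF inj] using i u by blast
  next
    case False
    then show ?thesis unfolding bit_xor_iff bit_perm_bits[OF inj] by blast
  qed
qed

lemma perm_pow: "inj_on \<pi> {..<n} \<Longrightarrow> c < n \<Longrightarrow> perm_bits n \<pi> (2^c) = 2^(\<pi> c)"
  by (rule bit_eqI) (auto simp: bit_perm_bits bit_exp_iff inj_on_def)

lemma perm_zero: "perm_bits n \<pi> 0 = 0"
  by (simp add: perm_bits_def)

lemma perm_xsum: "inj_on \<pi> {..<n} \<Longrightarrow> set X \<subseteq> {..<n} \<Longrightarrow> perm_bits n \<pi> (xsum X) = xsum (map \<pi> X)"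
  by (induction X) (auto simp: perm_zero perm_xor perm_pow)

lemma aut_of: "bij_betw \<pi> {..<n} {..<n} \<Longrightarrow> v \<in> qvert n \<Longrightarrow> qaut n (\<lambda>x. perm_bits n \<pi> (xor x v))"
  unfolding qaut_def by blast

lemma edges_img: "cycle_edges L = (\<lambda>i. {L ! i, L ! ((i + 1) mod length L)}) ` {..<length L}"
  by (auto simp: cycle_edges_def)

lemma edges_rotate1: "cycle_edges (rotate1 L) = cycle_edges L"
proof (cases "L = []")
  case True then show ?thesis by simp
next
  case False
  define m where "m = length L"
  have m: "m > 0" "length (rotate1 L) = m" using False by (auto simp: m_def)
  have r: "\<And>i. i < m \<Longrightarrow> rotate1 L ! i = L ! (Suc i mod m)"
    by (simp add: m_def nth_rotate1)
  have e: "\<And>i. i < m \<Longrightarrow> {rotate1 L ! i, rotate1 L ! ((i + 1) mod m)}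
     = {L ! ((i+1) mod m), L ! (((i+1) mod m + 1) mod m)}"
    using r m by (simp add: mod_Suc_eq)
  show ?thesis unfolding edges_img m(2) unfolding m_def[symmetric]
  proof (intro set_eqI iffI)
    fix E assume "E \<in> (\<lambda>i. {rotate1 L ! i, rotate1 L ! ((i + 1) mod m)}) ` {..<m}"
    then obtain i where "i < m" "E = {rotate1 L ! i, rotate1 L ! ((i + 1) mod m)}" by auto
    then show "E \<in> (\<lambda>i. {L ! i, L ! ((i + 1) mod m)}) ` {..<m}"
      using e m by (auto intro!: image_eqI[where x="(i+1) mod m"])
  next
    fix E assume "E \<in> (\<lambda>i. {L ! i, L ! ((i + 1) mod m)}) ` {..<m}"
    then obtain j where j: "j < m" "E = {L ! j, L ! ((j + 1) mod m)}" by auto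
    define i where "i = (if j = 0 then m - 1 else j - 1)"
    have i: "i < m" "(i + 1) mod m = j" using j m by (auto simp: i_def)
    show "E \<in> (\<lambda>i. {rotate1 L ! i, rotate1 L ! ((i + 1) mod m)}) ` {..<m}"
      using e[OF i(1)] i j by (auto intro!: image_eqI[where x=i])
  qed
qed

lemma edges_rotate: "cycle_edges (rotate s L) = cycle_edges L"
  by (induction s) (auto simp: edges_rotate1)




lemma cyc_steps:
  assumes "qcycle n C" "length C = 8"
  obtains d where "\<forall>i<8. d i < n \<and> C ! ((i+1) mod 8) = xor (C ! i) (2 ^ d i)"
proof -
  have "\<forall>i<8. \<exists>j. j < n \<and> C ! ((i+1) mod 8) = xor (C ! i) (2 ^ j)"
    using assms by (auto simp: qcycle_def qadj_iff)
  then obtain d where "\<forall>i<8. d i < n \<and> C ! ((i+1) mod 8) = xor (C ! i) (2 ^ d i)" by metis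
  then show ?thesis using that by blast
qed

lemma cyc_rot:
  assumes d: "\<forall>i<8. d i < n \<and> C ! ((i+1) mod 8) = xor (C ! i) (2 ^ d i)"
    and s: "s < 8" and len: "length C = 8"
  shows "i \<le> 8 \<Longrightarrow> C ! ((s+i) mod 8) = xor (C ! s) (xsum (take i (rotate s (map d [0..<8]))))"
proof (induction i)
  case 0 then show ?case using s by simp
next
  case (Suc i)
  let ?D = "rotate s (map d [0..<8])"
  have i: "i < 8" using Suc by simp
  have Di: "?D ! i = d ((s + i) mod 8)" using i by (simp add: nth_rotate)
  have tk: "take (Suc i) ?D = take i ?D @ [?D ! i]" using i by (simp add: take_Suc_conv_app_nth)
  have m: "(s + Suc i) mod 8 = ((s + i) mod 8 + 1) mod 8" by (simp add: mod_Suc_eq)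
  have "C ! ((s + Suc i) mod 8) = xor (C ! ((s + i) mod 8)) (2 ^ d ((s + i) mod 8))"
    unfolding m using d by simp
  also have "\<dots> = xor (C ! s) (xsum (take (Suc i) ?D))"
    using Suc.IH i unfolding tk xsum_snoc Di by (simp add: xor.assoc)
  finally show ?case .
qed

lemma key:
  assumes d: "\<forall>i<8. d i < n \<and> C ! ((i+1) mod 8) = xor (C ! i) (2 ^ d i)"
    and s: "s < 8" and len: "length C = 8" and pi: "bij_betw \<pi> {..<n} {..<n}"
  shows "map (\<lambda>x. perm_bits n \<pi> (xor x (C ! s))) (rotate s C) = walkf 0 (map \<pi> (rotate s (map d [0..<8])))"
    and "endp 0 (map \<pi> (rotate s (map d [0..<8]))) = 0"
proof -
  let ?D = "rotate s (map d [0..<8])"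
  have inj: "inj_on \<pi> {..<n}" using pi bij_betw_def by blast
  have setD: "set ?D \<subseteq> {..<n}" using d by auto
  have lenD: "length ?D = 8" by simp
  show "map (\<lambda>x. perm_bits n \<pi> (xor x (C ! s))) (rotate s C) = walkf 0 (map \<pi> ?D)"
  proof (rule nth_equalityI)
    show "length (map (\<lambda>x. perm_bits n \<pi> (xor x (C ! s))) (rotate s C)) = length (walkf 0 (map \<pi> ?D))"
      using len by (simp add: walkf_len)
  next
    fix i assume "i < length (map (\<lambda>x. perm_bits n \<pi> (xor x (C ! s))) (rotate s C))"
    then have i: "i < 8" using len by simp
    have "rotate s C ! i = C ! ((s + i) mod 8)" using i len by (simp add: nth_rotate)
    also have "\<dots> = xor (C ! s) (xsum (take i ?D))" using cyc_rot[OF d s len, of i] i by simp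
    finally have r: "rotate s C ! i = xor (C ! s) (xsum (take i ?D))" .
    have st: "set (take i ?D) \<subseteq> {..<n}" by (rule subset_trans[OF set_take_subset setD])
    have "perm_bits n \<pi> (xor (rotate s C ! i) (C ! s)) = xsum (map \<pi> (take i ?D))"
      unfolding r xor_self_cancel[of "C ! s"] by (rule perm_xsum[OF inj st])
    then show "map (\<lambda>x. perm_bits n \<pi> (xor x (C ! s))) (rotate s C) ! i = walkf 0 (map \<pi> ?D) ! i"
      using i len by (simp add: walkf_nth take_map)
  qed
  have "C ! ((s + 8) mod 8) = xor (C ! s) (xsum (take 8 ?D))" using cyc_rot[OF d s len, of 8] by simp
  then have "xor (C ! s) (xsum ?D) = C ! s" using s by simp
  then have "xsum ?D = 0" by (rule xor_eq_self)
  then show "endp 0 (map \<pi> ?D) = 0"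
    using perm_xsum[OF inj setD] by (simp add: endp_xsum perm_zero)
qed




lemma exists_class:
  assumes cyc: "qcycle n C" and len: "length C = 8"
  shows "\<exists>k\<in>{1..7}. maps_cycle_onto n C (C8 k)"
proof -
  obtain d where d: "\<forall>i<8. d i < n \<and> C ! ((i+1) mod 8) = xor (C ! i) (2 ^ d i)"
    using cyc_steps[OF cyc len] by blast
  define ds where "ds = map d [0..<8]"
  have setds: "set ds \<subseteq> {..<n}" using d by (auto simp: ds_def)
  have cardds: "card (set ds) \<le> n" using card_mono[OF _ setds] by simp
  have Cv: "set C \<subseteq> qvert n" using cyc by (simp add: qcycle_def)
  have dC: "distinct C" using cyc by (simp add: qcycle_def)
  obtain \<tau>0 where t0: "inj_on \<tau>0 (set ds)" "\<tau>0 ` set ds = {..<card (set ds)}" "map \<tau>0 ds = nrm [] ds"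
    using nrm_tau[of "[]" ds] by auto
  obtain \<pi>0 where p0: "bij_betw \<pi>0 {..<n} {..<n}" "\<forall>x\<in>set ds. \<pi>0 x = \<tau>0 x"
    using extend_bij[OF setds t0(1)] t0(2) cardds by auto
  have inj0: "inj_on \<pi>0 {..<n}" using p0(1) bij_betw_def by blast
  define e where "e = nrm [] ds"
  have e: "e = map \<pi>0 ds" using p0(2) t0(3) unfolding e_def by (metis map_eq_conv)
  define f0 where "f0 = (\<lambda>x. perm_bits n \<pi>0 (xor x (C ! 0)))"
  have C0: "C ! 0 \<in> qvert n" using Cv len by (simp add: subset_iff)
  have f0aut: "qaut n f0" unfolding f0_def by (rule aut_of[OF p0(1) C0])
  have k0: "map f0 C = walkf 0 e" "endp 0 e = 0"
    using key[OF d _ len p0(1), of 0] unfolding e ds_def f0_def by simp_all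
  have "distinct (map f0 C)"
    using dC aut_inj[OF f0aut] Cv by (simp add: distinct_map inj_on_subset)
  then have de: "distinct (walkf 0 e)" using k0 by simp
  have rg: "rgm 0 e" using nrm_rgm[of "[]" ds] by (simp add: e_def)
  have le: "length e = 8" by (simp add: e_def nrm_len ds_def)
  have "okf (rev [] @ e)"
    by (rule chk_sound[OF chk8 le rg de _ k0(2)]) simp
  then obtain s where s: "s < 8" "nrm [] (rotate s e) \<in> set cseqs" by (auto simp: okf_def)
  define D where "D = rotate s ds"
  have setD: "set D = set ds" by (simp add: D_def)
  have "rotate s e = map \<pi>0 D" by (simp add: e D_def rotate_map)
  moreover have "nrm (map \<pi>0 []) (map \<pi>0 D) = nrm [] D"
    by (rule nrm_map) (use inj0 setD setds in \<open>auto intro: inj_on_subset\<close>)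
  ultimately have nD: "nrm [] D \<in> set cseqs" using s(2) by simp
  obtain \<tau> where t: "inj_on \<tau> (set D)" "\<tau> ` set D = {..<card (set D)}" "map \<tau> D = nrm [] D"
    using nrm_tau[of "[]" D] by auto
  obtain \<pi> where p: "bij_betw \<pi> {..<n} {..<n}" "\<forall>x\<in>set D. \<pi> x = \<tau> x"
    using extend_bij[of "set D" n \<tau>] t(1,2) cardds setD setds by auto
  have mD: "map \<pi> D = nrm [] D" using p(2) t(3) by (metis map_eq_conv)
  define f where "f = (\<lambda>x. perm_bits n \<pi> (xor x (C ! s)))"
  have Cs: "C ! s \<in> qvert n" using Cv len s by (simp add: subset_iff)
  have faut: "qaut n f" unfolding f_def by (rule aut_of[OF p(1) Cs])
  have mf: "map f (rotate s C) = walkf 0 (nrm [] D)"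
    using key(1)[OF d s(1) len p(1)] mD unfolding f_def D_def ds_def by simp
  obtain k where k: "k \<in> {1..7}" "walkf 0 (nrm [] D) = C8 k"
  proof -
    have "walkf 0 (nrm [] D) \<in> set (map (walkf 0) cseqs)" using nD by simp
    then have "walkf 0 (nrm [] D) \<in> set (map C8 [1..<8])" unfolding cseqs_walk .
    then obtain k where "k \<in> set [1..<8]" "walkf 0 (nrm [] D) = C8 k" by auto
    then show ?thesis using that by force
  qed
  have "cycle_edges (map f C) = cycle_edges (rotate s (map f C))" by (simp add: edges_rotate)
  also have "\<dots> = cycle_edges (C8 k)" using mf k by (simp add: rotate_map)
  finally show ?thesis using faut k unfolding maps_cycle_onto_def by blast
qed




lemma c8_facts: "list_all (\<lambda>k. distinct (C8 k) \<and> length (C8 k) = 8 \<and>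
   (\<forall>i\<in>set [0..<8]. \<exists>j\<in>set [0..<4]. C8 k ! ((i+1) mod 8) = xor (C8 k ! i) (2^j))) [1..<8]"
  by code_simp

lemma hv1: "hv 1 = 96" by code_simp
lemma hv2: "hv 2 = 116" by code_simp
lemma hv3: "hv 3 = 112" by code_simp
lemma hv4: "hv 4 = 108" by code_simp
lemma hv5: "hv 5 = 128" by code_simp
lemma hv6: "hv 6 = 124" by code_simp
lemma hv7: "hv 7 = 120" by code_simp

lemma k7: "(k::nat) \<in> {1..7} \<Longrightarrow> k = 1 \<or> k = 2 \<or> k = 3 \<or> k = 4 \<or> k = 5 \<or> k = 6 \<or> k = 7"
  by auto

lemma hv1': "hv (Suc 0) = 96" using hv1 by simp

lemma hv_inj: "j \<in> {1..7} \<Longrightarrow> k \<in> {1..7} \<Longrightarrow> hv j = hv k \<Longrightarrow> j = k"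
  by (drule k7, drule k7) (auto simp: hv1 hv1' hv2 hv3 hv4 hv5 hv6 hv7)

lemma Ev4_eq: "Ev4 C = set (filter (\<lambda>u. length (filter (bit u) [0..<4]) mod 2 = 0) C)"
  by (auto simp: Ev4_def)

lemma ev1: "(\<Sum>u\<in>Ev4 (C8 1). cc (C8 1) u) = 4 \<and> card (Ev4 (C8 1)) = 4" unfolding Ev4_eq by code_simp
lemma ev2: "(\<Sum>u\<in>Ev4 (C8 2). cc (C8 2) u) = 7 \<and> card (Ev4 (C8 2)) = 4" unfolding Ev4_eq by code_simp
lemma ev3: "(\<Sum>u\<in>Ev4 (C8 3). cc (C8 3) u) = 6 \<and> card (Ev4 (C8 3)) = 4" unfolding Ev4_eq by code_simp
lemma ev4: "(\<Sum>u\<in>Ev4 (C8 4). cc (C8 4) u) = 6 \<and> card (Ev4 (C8 4)) = 4" unfolding Ev4_eq by code_simp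
lemma ev5: "(\<Sum>u\<in>Ev4 (C8 5). cc (C8 5) u) = 8 \<and> card (Ev4 (C8 5)) = 4" unfolding Ev4_eq by code_simp
lemma ev6: "(\<Sum>u\<in>Ev4 (C8 6). cc (C8 6) u) = 8 \<and> card (Ev4 (C8 6)) = 4" unfolding Ev4_eq by code_simp
lemma ev7: "(\<Sum>u\<in>Ev4 (C8 7). cc (C8 7) u) = 8 \<and> card (Ev4 (C8 7)) = 4" unfolding Ev4_eq by code_simp

lemma pow16: "4 \<le> n \<Longrightarrow> (16::nat) \<le> 2 ^ n"
proof -
  assume "4 \<le> n"
  then have "(2::nat)^4 \<le> 2^n" by (rule power_increasing) simp
  then show ?thesis by simp
qed

lemma C8_vert: "4 \<le> n \<Longrightarrow> set (C8 k) \<subseteq> qvert n"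
  using C8_small pow16 by (fastforce simp: qvert_def)

lemma C8_sub16: "set (C8 k) \<subseteq> {..<16}"
  using C8_small by auto

lemma C8_nonempty: "C8 k \<noteq> []" by (simp add: C8_def)

lemma C8_cycle: "4 \<le> n \<Longrightarrow> k \<in> {1..7} \<Longrightarrow> qcycle n (C8 k) \<and> length (C8 k) = 8"
proof -
  assume n: "4 \<le> n" and k: "k \<in> {1..7}"
  have "k \<in> set [1..<8]" using k by auto
  then have f: "distinct (C8 k)" "length (C8 k) = 8"
    "\<forall>i\<in>set [0..<8]. \<exists>j\<in>set [0..<4]. C8 k ! ((i+1) mod 8) = xor (C8 k ! i) (2^j)"
    using c8_facts by (auto simp: list_all_iff)
  have "\<forall>i < length (C8 k). qadj n (C8 k ! i) (C8 k ! ((i + 1) mod length (C8 k)))"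
  proof (intro allI impI)
    fix i assume i: "i < length (C8 k)"
    have "i \<in> set [0..<8]" using i f(2) by simp
    then obtain j where "j \<in> set [0..<4]" "C8 k ! ((i+1) mod 8) = xor (C8 k ! i) (2^j)" using f(3) by blast
    then have j: "j < 4" "C8 k ! ((i+1) mod 8) = xor (C8 k ! i) (2^j)" by auto
    have "C8 k ! i \<in> qvert n" using C8_vert[OF n] i nth_mem by blast
    then show "qadj n (C8 k ! i) (C8 k ! ((i + 1) mod length (C8 k)))"
      using j n f(2) unfolding qadj_iff by (intro conjI exI[of _ j]) auto
  qed
  then show ?thesis using f C8_vert[OF n] by (simp add: qcycle_def)
qed

lemma maps_hv: "4 \<le> n \<Longrightarrow> maps_cycle_onto n C (C8 k) \<Longrightarrow> C \<noteq> [] \<Longrightarrow> set C \<subseteq> qvert n \<Longrightarrow>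
   hsum n (set C) = hv k"
  using maps_hsum hsum_C8 by metis

theorem mainTheorem9:
  fixes n :: nat
  assumes "n \<ge> 4"
  shows "(\<forall>k \<in> {1..7}. qcycle n (C8 k) \<and> length (C8 k) = 8)
    \<and> (\<forall>C. qcycle n C \<and> length C = 8 \<longrightarrow>
          (\<exists>!k. k \<in> {1..7} \<and> maps_cycle_onto n C (C8 k)))
    \<and> (\<forall>j \<in> {1..7}. \<forall>k \<in> {1..7}. j \<noteq> k \<longrightarrow> \<not> maps_cycle_onto n (C8 j) (C8 k))
    \<and> even_out_edges n (C8 1) = 4 * n - 12
    \<and> even_out_edges n (C8 2) = 4 * n - 9
    \<and> even_out_edges n (C8 3) = 4 * n - 10
    \<and> even_out_edges n (C8 4) = 4 * n - 10
    \<and> even_out_edges n (C8 5) = 4 * n - 8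
    \<and> even_out_edges n (C8 6) = 4 * n - 8
    \<and> even_out_edges n (C8 7) = 4 * n - 8"
proof -
  have P1: "\<forall>k \<in> {1..7}. qcycle n (C8 k) \<and> length (C8 k) = 8" using C8_cycle assms by blast
  have P2: "\<forall>C. qcycle n C \<and> length C = 8 \<longrightarrow> (\<exists>!k. k \<in> {1..7} \<and> maps_cycle_onto n C (C8 k))"
  proof (intro allI impI)
    fix C assume a: "qcycle n C \<and> length C = 8"
    have ne: "C \<noteq> []" using a by auto
    have sv: "set C \<subseteq> qvert n" using a by (simp add: qcycle_def)
    obtain k where k: "k \<in> {1..7}" "maps_cycle_onto n C (C8 k)" using exists_class a by blast
    show "\<exists>!k. k \<in> {1..7} \<and> maps_cycle_onto n C (C8 k)"
    proof (rule ex1I[of _ k])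
      show "k \<in> {1..7} \<and> maps_cycle_onto n C (C8 k)" using k by blast
    next
      fix j assume j: "j \<in> {1..7} \<and> maps_cycle_onto n C (C8 j)"
      have "hv j = hv k" using maps_hv[OF assms] j k ne sv by metis
      then show "j = k" using hv_inj j k by blast
    qed
  qed
  have P3: "\<forall>j \<in> {1..7}. \<forall>k \<in> {1..7}. j \<noteq> k \<longrightarrow> \<not> maps_cycle_onto n (C8 j) (C8 k)"
  proof (intro ballI impI notI)
    fix j k assume jk: "j \<in> {1..7}" "k \<in> {1..7}" "j \<noteq> k" and m: "maps_cycle_onto n (C8 j) (C8 k)"
    have "hsum n (set (C8 j)) = hv k" by (rule maps_hv[OF assms m C8_nonempty C8_vert[OF assms]])
    then have "hv j = hv k" using hsum_C8[OF assms] by simp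
    then show False using hv_inj jk by blast
  qed
  have E: "\<And>k. even_out_edges n (C8 k) = (\<Sum>u\<in>Ev4 (C8 k). cc (C8 k) u) + card (Ev4 (C8 k)) * (n - 4)"
    by (rule eoe_formula[OF C8_sub16 assms])
  have A: "4 + 4 * (n - 4) = 4 * n - 12" "7 + 4 * (n - 4) = 4 * n - 9"
    "6 + 4 * (n - 4) = 4 * n - 10" "8 + 4 * (n - 4) = 4 * n - 8" using assms by arith+
  show ?thesis using P1 P2 P3 E ev1 ev2 ev3 ev4 ev5 ev6 ev7 A by simp
qed


end
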